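(* Let $G$ be a graph of diameter $3$. Then $\chi_{ei}(G)\ge \rho(G)\ge \gamma_2(G)$. Moreover, there are graphs of diameter $3$ for which both equalities hold.
   Context: All graphs are finite and simple. A path $P_4$ in $G$ is a sequence $uxyv$ of four distinct vertices with $ux,xy,yv\in E(G)$; $u,v$ are its end vertices. An $e$-injective $k$-coloring of $G$ is a function $f:V(G)\to\{1,\dots,k\}$ with $f(u)\ne f(v)$ whenever $u,v$ are the end vertices of some path $P_4$ in $G$; $\chi_{ei}(G)$ is the least such $k$. A set $B\subseteq V(G)$ is a packing if $N[u]\cap N[v]=\emptyset$ for all distinct $u,v\in B$ (where $N[v]$ is the closed neighborhood); the packing number $\rho(G)$ is the maximum size of a packing. A set $D\subseteq V(G)$ is a 2-distance dominating set if every vertex not in $D$ is at distance at most $2$ from some vertex of $D$; $\gamma_2(G)$ is the minimum size of such a set. *)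

theory Defs
  imports Main
begin

definition graph :: "'a set \<Rightarrow> ('a \<Rightarrow> 'a \<Rightarrow> bool) \<Rightarrow> bool" where
  "graph V E \<longleftrightarrow> finite V \<and> (\<forall>u v. E u v \<longrightarrow> u \<in> V \<and> v \<in> V)
     \<and> (\<forall>u v. E u v \<longrightarrow> E v u) \<and> (\<forall>u. \<not> E u u)"

fun within :: "('a \<Rightarrow> 'a \<Rightarrow> bool) \<Rightarrow> nat \<Rightarrow> 'a \<Rightarrow> 'a \<Rightarrow> bool" where
  "within E 0 u v \<longleftrightarrow> u = v"
| "within E (Suc n) u v \<longleftrightarrow> u = v \<or> (\<exists>w. E u w \<and> within E n w v)"

definition connected_graph :: "'a set \<Rightarrow> ('a \<Rightarrow> 'a \<Rightarrow> bool) \<Rightarrow> bool" where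
  "connected_graph V E \<longleftrightarrow> V \<noteq> {} \<and> (\<forall>u\<in>V. \<forall>v\<in>V. \<exists>n. within E n u v)"

definition gdist :: "('a \<Rightarrow> 'a \<Rightarrow> bool) \<Rightarrow> 'a \<Rightarrow> 'a \<Rightarrow> nat" where
  "gdist E u v = (LEAST n. within E n u v)"

definition diameter :: "'a set \<Rightarrow> ('a \<Rightarrow> 'a \<Rightarrow> bool) \<Rightarrow> nat" where
  "diameter V E = Max {gdist E u v | u v. u \<in> V \<and> v \<in> V}"

definition has_diameter :: "'a set \<Rightarrow> ('a \<Rightarrow> 'a \<Rightarrow> bool) \<Rightarrow> nat \<Rightarrow> bool" where
  "has_diameter V E d \<longleftrightarrow> connected_graph V E \<and> diameter V E = d"

definition P4_ends :: "('a \<Rightarrow> 'a \<Rightarrow> bool) \<Rightarrow> 'a \<Rightarrow> 'a \<Rightarrow> bool" where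
  "P4_ends E u v \<longleftrightarrow> (\<exists>x y. distinct [u, x, y, v] \<and> E u x \<and> E x y \<and> E y v)"

definition ei_coloring :: "'a set \<Rightarrow> ('a \<Rightarrow> 'a \<Rightarrow> bool) \<Rightarrow> nat \<Rightarrow> ('a \<Rightarrow> nat) \<Rightarrow> bool" where
  "ei_coloring V E k f \<longleftrightarrow> (\<forall>v\<in>V. f v \<in> {1..k})
     \<and> (\<forall>u\<in>V. \<forall>v\<in>V. P4_ends E u v \<longrightarrow> f u \<noteq> f v)"

definition chi_ei :: "'a set \<Rightarrow> ('a \<Rightarrow> 'a \<Rightarrow> bool) \<Rightarrow> nat" where
  "chi_ei V E = (LEAST k. \<exists>f. ei_coloring V E k f)"

definition closed_nbhd :: "('a \<Rightarrow> 'a \<Rightarrow> bool) \<Rightarrow> 'a \<Rightarrow> 'a set" where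
  "closed_nbhd E v = insert v {u. E v u}"

definition packing :: "'a set \<Rightarrow> ('a \<Rightarrow> 'a \<Rightarrow> bool) \<Rightarrow> 'a set \<Rightarrow> bool" where
  "packing V E B \<longleftrightarrow> B \<subseteq> V \<and>
     (\<forall>u\<in>B. \<forall>v\<in>B. u \<noteq> v \<longrightarrow> closed_nbhd E u \<inter> closed_nbhd E v = {})"

definition packing_number :: "'a set \<Rightarrow> ('a \<Rightarrow> 'a \<Rightarrow> bool) \<Rightarrow> nat" where
  "packing_number V E = Max {card B | B. packing V E B}"

definition dist2_dominating :: "'a set \<Rightarrow> ('a \<Rightarrow> 'a \<Rightarrow> bool) \<Rightarrow> 'a set \<Rightarrow> bool" where
  "dist2_dominating V E D \<longleftrightarrow> D \<subseteq> V \<and>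
     (\<forall>v\<in>V - D. \<exists>u\<in>D. gdist E u v \<le> 2)"

definition gamma2 :: "'a set \<Rightarrow> ('a \<Rightarrow> 'a \<Rightarrow> bool) \<Rightarrow> nat" where
  "gamma2 V E = (LEAST k. \<exists>D. dist2_dominating V E D \<and> card D = k)"

end

theory Submission
  imports Defs
begin

lemma within_mono: "within E n u v \<Longrightarrow> n \<le> m \<Longrightarrow> within E m u v"
proof (induction n arbitrary: m u)
  case 0 then show ?case by (cases m) auto
next
  case (Suc n)
  then obtain m' where m: "m = Suc m'" by (cases m) auto
  with Suc show ?case by auto
qed

lemma gdist_le: "within E n u v \<Longrightarrow> gdist E u v \<le> n"
  unfolding gdist_def by (rule Least_le)

lemma within_gdist: "within E n u v \<Longrightarrow> within E (gdist E u v) u v"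
  unfolding gdist_def by (rule LeastI)

lemma diam3_within3:
  assumes g: "graph V E" and d: "has_diameter V E 3" and u: "u \<in> V" and v: "v \<in> V"
  shows "within E 3 u v"
proof -
  from d u v obtain n where n: "within E n u v"
    unfolding has_diameter_def connected_graph_def by blast
  have fin: "finite {gdist E u v | u v. u \<in> V \<and> v \<in> V}"
    using g unfolding graph_def by (intro finite_image_set2) auto
  have "gdist E u v \<le> diameter V E"
    unfolding diameter_def using fin u v by (intro Max_ge) auto
  with d have "gdist E u v \<le> 3" unfolding has_diameter_def by simp
  with within_gdist[OF n] show ?thesis by (rule within_mono)
qed

lemma packing_P4:
  assumes g: "graph V E" and d: "has_diameter V E 3" and p: "packing V E B"
    and u: "u \<in> B" and v: "v \<in> B" and uv: "u \<noteq> v"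
  shows "P4_ends E u v"
proof -
  have uV: "u \<in> V" and vV: "v \<in> V" using p u v unfolding packing_def by auto
  have disj: "closed_nbhd E u \<inter> closed_nbhd E v = {}"
    using p u v uv unfolding packing_def by auto
  have sym: "\<And>a b. E a b \<Longrightarrow> E b a" and irr: "\<And>a. \<not> E a a"
    using g unfolding graph_def by auto
  have w3: "within E 3 u v" using diam3_within3[OF g d uV vV] .
  have nuv: "\<not> E u v" using disj unfolding closed_nbhd_def by auto
  have ncom: "\<And>x. E u x \<Longrightarrow> E x v \<Longrightarrow> False"
    using disj sym unfolding closed_nbhd_def by auto
  from w3 uv obtain x where ux: "E u x" and xw: "within E 2 x v"
    by (auto simp: numeral_eq_Suc)
  from xw nuv ux obtain y where xy: "E x y" and yw: "within E 1 y v"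
    by (auto simp: numeral_eq_Suc)
  from yw ncom ux xy have yv: "E y v" by auto
  have "distinct [u, x, y, v]"
    using ux xy yv irr nuv ncom sym uv by auto
  then show ?thesis unfolding P4_ends_def using ux xy yv by blast
qed

lemma packing_max:
  assumes g: "graph V E"
  shows "\<exists>B. packing V E B \<and> card B = packing_number V E"
    and "packing V E B' \<Longrightarrow> card B' \<le> packing_number V E"
proof -
  have fV: "finite V" using g unfolding graph_def by auto
  have fin: "finite {card B | B. packing V E B}"
  proof (rule finite_subset)
    show "{card B | B. packing V E B} \<subseteq> card ` Pow V" unfolding packing_def by auto
    show "finite (card ` Pow V)" using fV by simp
  qed
  have ne: "{card B | B. packing V E B} \<noteq> {}"
    unfolding packing_def by auto
  show "\<exists>B. packing V E B \<and> card B = packing_number V E"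
    using Max_in[OF fin ne] unfolding packing_number_def by auto
  show "packing V E B' \<Longrightarrow> card B' \<le> packing_number V E"
    unfolding packing_number_def using fin by (intro Max_ge) auto
qed

lemma coloring_exists:
  assumes g: "graph V E"
  shows "\<exists>f. ei_coloring V E (card V) f"
proof -
  have fV: "finite V" using g unfolding graph_def by auto
  obtain h where h: "bij_betw h {1..card V} V"
    using ex_bij_betw_nat_finite_1[OF fV] by blast
  define f where "f = inv_into {1..card V} h"
  have "bij_betw f V {1..card V}" unfolding f_def using h by (rule bij_betw_inv_into)
  then have "\<forall>v\<in>V. f v \<in> {1..card V}" and "inj_on f V"
    by (auto simp: bij_betw_def)
  moreover have "\<And>u v. P4_ends E u v \<Longrightarrow> u \<noteq> v" unfolding P4_ends_def by auto
  ultimately have "ei_coloring V E (card V) f"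
    unfolding ei_coloring_def by (metis inj_onD)
  then show ?thesis by blast
qed

lemma part1:
  assumes g: "graph V E" and d: "has_diameter V E 3"
  shows "chi_ei V E \<ge> packing_number V E \<and> packing_number V E \<ge> gamma2 V E"
proof -
  have fV: "finite V" using g unfolding graph_def by auto
  obtain B where p: "packing V E B" and cB: "card B = packing_number V E"
    using packing_max(1)[OF g] by blast
  have BV: "B \<subseteq> V" using p unfolding packing_def by auto
  have fB: "finite B" using finite_subset[OF BV fV] .
  have exk: "\<exists>k f. ei_coloring V E k f" using coloring_exists[OF g] by blast
  obtain f where f: "ei_coloring V E (chi_ei V E) f"
    using LeastI_ex[OF exk] unfolding chi_ei_def by blast
  have inj: "inj_on f B"
  proof (rule inj_onI)
    fix a b assume a: "a \<in> B" and b: "b \<in> B" and fab: "f a = f b"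
    show "a = b"
    proof (rule ccontr)
      assume "a \<noteq> b"
      then have "P4_ends E a b" using packing_P4[OF g d p a b] by blast
      then show False using f a b BV fab unfolding ei_coloring_def by blast
    qed
  qed
  have "f ` B \<subseteq> {1..chi_ei V E}" using f BV unfolding ei_coloring_def by auto
  then have "card (f ` B) \<le> card {1..chi_ei V E}" by (intro card_mono) auto
  with inj have c1: "card B \<le> chi_ei V E" by (simp add: card_image)
  have sym: "\<And>a b. E a b \<Longrightarrow> E b a" using g unfolding graph_def by auto
  have dom: "dist2_dominating V E B"
    unfolding dist2_dominating_def
  proof (intro conjI ballI)
    show "B \<subseteq> V" by (rule BV)
    fix v assume v: "v \<in> V - B"
    show "\<exists>u\<in>B. gdist E u v \<le> 2"
    proof (rule ccontr)
      assume nd: "\<not> (\<exists>u\<in>B. gdist E u v \<le> 2)"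
      have "packing V E (insert v B)"
        unfolding packing_def
      proof (intro conjI ballI impI)
        show "insert v B \<subseteq> V" using BV v by auto
        fix a b assume a: "a \<in> insert v B" and b: "b \<in> insert v B" and ab: "a \<noteq> b"
        have key: "closed_nbhd E u \<inter> closed_nbhd E v = {}" if u: "u \<in> B" for u
        proof (rule ccontr)
          assume "closed_nbhd E u \<inter> closed_nbhd E v \<noteq> {}"
          then obtain w where w1: "w \<in> closed_nbhd E u" and w2: "w \<in> closed_nbhd E v" by blast
          have "within E 2 u v"
            using w1 w2 sym unfolding closed_nbhd_def by (auto simp: numeral_eq_Suc)
          then have "gdist E u v \<le> 2" by (rule gdist_le)
          with nd u show False by blast
        qed
        show "closed_nbhd E a \<inter> closed_nbhd E b = {}"
        proof (cases "a = v")
          case True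
          with ab b have "b \<in> B" by auto
          with key True show ?thesis by blast
        next
          case False
          with a have aB: "a \<in> B" by auto
          show ?thesis
          proof (cases "b = v")
            case True with key aB show ?thesis by blast
          next
            case False with b aB ab p show ?thesis unfolding packing_def by auto
          qed
        qed
      qed
      then have "card (insert v B) \<le> packing_number V E" by (rule packing_max(2)[OF g])
      with v fB cB show False by simp
    qed
  qed
  have c2: "gamma2 V E \<le> card B"
    unfolding gamma2_def using dom by (intro Least_le) blast
  show ?thesis using c1 c2 cB by simp
qed

definition c6E :: "nat \<Rightarrow> nat \<Rightarrow> bool" where
  "c6E u v \<longleftrightarrow> u < 6 \<and> (v = (u + 1) mod 6 \<or> v = (u + 5) mod 6)"

definition c6V :: "nat set" where "c6V = {0,1,2,3,4,5}"

lemma c6V_iff: "u \<in> c6V \<longleftrightarrow> u < 6"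
  unfolding c6V_def by auto

lemma lt6_cases: "(u::nat) < 6 \<Longrightarrow> u = 0 \<or> u = 1 \<or> u = 2 \<or> u = 3 \<or> u = 4 \<or> u = 5"
  by auto

lemma c6_in: "c6E u v \<Longrightarrow> u \<in> c6V \<and> v \<in> c6V"
  by (auto simp: c6E_def c6V_def dest!: lt6_cases)

lemma c6_sym: "c6E u v \<Longrightarrow> c6E v u"
  by (auto simp: c6E_def dest!: lt6_cases)

lemma c6_irr: "\<not> c6E u u"
  by (cases "u < 6") (auto simp: c6E_def dest!: lt6_cases)

lemma c6_graph: "graph c6V c6E"
  unfolding graph_def using c6_in c6_sym c6_irr by (auto simp: c6V_def)

lemma within_c6: "within c6E (Suc n) u v \<longleftrightarrow> u = v \<or> (u < 6 \<and>
   (within c6E n ((u + 1) mod 6) v \<or> within c6E n ((u + 5) mod 6) v))"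
  by (auto simp: c6E_def)

lemma c6_within3: "u \<in> c6V \<Longrightarrow> v \<in> c6V \<Longrightarrow> within c6E 3 u v"
  unfolding c6V_iff numeral_3_eq_3 using lt6_cases[of u] lt6_cases[of v]
  by (auto simp del: within.simps(2) simp add: within_c6)

lemma c6_not2: "u \<in> c6V \<Longrightarrow> \<not> within c6E 2 u ((u + 3) mod 6)"
  unfolding c6V_iff numeral_2_eq_2 using lt6_cases[of u]
  by (auto simp del: within.simps(2) simp add: within_c6)


lemma c6_gdist3: "u \<in> c6V \<Longrightarrow> gdist c6E u ((u + 3) mod 6) = 3"
proof -
  assume u: "u \<in> c6V"
  have a: "(u + 3) mod 6 \<in> c6V" unfolding c6V_iff by simp
  have w: "within c6E 3 u ((u + 3) mod 6)" using c6_within3[OF u a] .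
  have le: "gdist c6E u ((u + 3) mod 6) \<le> 3" using gdist_le[OF w] .
  have "\<not> gdist c6E u ((u + 3) mod 6) \<le> 2"
    using within_mono[OF within_gdist[OF w], of 2] c6_not2[OF u] by blast
  with le show ?thesis by simp
qed

lemma c6_diam: "has_diameter c6V c6E 3"
proof -
  have conn: "connected_graph c6V c6E"
    unfolding connected_graph_def
  proof
    show "c6V \<noteq> {}" by (simp add: c6V_def)
    show "\<forall>u\<in>c6V. \<forall>v\<in>c6V. \<exists>n. within c6E n u v" using c6_within3 by blast
  qed
  let ?S = "{gdist c6E u v | u v. u \<in> c6V \<and> v \<in> c6V}"
  have fin: "finite ?S" by (intro finite_image_set2) (auto simp: c6V_def)
  have le: "\<forall>x\<in>?S. x \<le> 3"
  proof
    fix x assume "x \<in> ?S"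
    then obtain u v where "x = gdist c6E u v" "u \<in> c6V" "v \<in> c6V" by blast
    then show "x \<le> 3" using c6_within3 gdist_le by metis
  qed
  have in3: "3 \<in> ?S"
  proof -
    have "(0::nat) \<in> c6V" "(3::nat) \<in> c6V" by (auto simp: c6V_def)
    moreover have "gdist c6E 0 3 = 3" using c6_gdist3[of 0] by (simp add: c6V_def)
    ultimately show ?thesis by force
  qed
  have "Max ?S = 3"
    using fin le in3 by (intro Max_eqI) auto
  with conn show ?thesis unfolding has_diameter_def diameter_def by simp
qed

lemma c6_P4: "P4_ends c6E u v \<Longrightarrow> u < 6 \<and> v < 6 \<and> v = (u + 3) mod 6"
proof -
  assume "P4_ends c6E u v"
  then obtain x y where d: "distinct [u, x, y, v]" and e: "c6E u x" "c6E x y" "c6E y v"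
    unfolding P4_ends_def by blast
  from e have u: "u < 6" by (simp add: c6E_def)
  from lt6_cases[OF u] d e show ?thesis
    by (auto simp: c6E_def)
qed

lemma c6_chi: "chi_ei c6V c6E \<le> 2"
proof -
  define f :: "nat \<Rightarrow> nat" where "f v = (if v < 3 then 1 else 2)" for v
  have "ei_coloring c6V c6E 2 f"
    unfolding ei_coloring_def
  proof (intro conjI ballI impI)
    fix v assume "v \<in> c6V" then show "f v \<in> {1..2}" by (simp add: f_def)
  next
    fix u v assume "P4_ends c6E u v"
    from c6_P4[OF this] show "f u \<noteq> f v"
      by (auto simp: f_def dest!: lt6_cases)
  qed
  then show ?thesis unfolding chi_ei_def by (intro Least_le) blast
qed

lemma c6_gamma: "gamma2 c6V c6E \<ge> 2"
proof -
  have ex: "\<exists>k D. dist2_dominating c6V c6E D \<and> card D = k"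
    unfolding dist2_dominating_def by blast
  obtain D where D: "dist2_dominating c6V c6E D" and cD: "card D = gamma2 c6V c6E"
    using LeastI_ex[OF ex] unfolding gamma2_def by blast
  have DV: "D \<subseteq> c6V" using D unfolding dist2_dominating_def by auto
  have fD: "finite D" using DV by (rule finite_subset) (simp add: c6V_def)
  show ?thesis
  proof (rule ccontr)
    assume "\<not> 2 \<le> gamma2 c6V c6E"
    then have "card D = 0 \<or> card D = 1" using cD by auto
    then show False
    proof
      assume "card D = 0"
      with fD have "D = {}" by simp
      moreover have "(0::nat) \<in> c6V" by (simp add: c6V_def)
      ultimately show False using D unfolding dist2_dominating_def by blast
    next
      assume "card D = 1"
      then obtain u where Du: "D = {u}" by (rule card_1_singletonE)
      with DV have u: "u \<in> c6V" by auto
      have a: "(u + 3) mod 6 \<in> c6V - D"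
        using u Du by (auto simp: c6V_iff dest!: lt6_cases)
      with D Du have "gdist c6E u ((u + 3) mod 6) \<le> 2"
        unfolding dist2_dominating_def by blast
      with c6_gdist3[OF u] show False by simp
    qed
  qed
qed

theorem proposition2p7:
  shows "(\<forall>(V :: 'a set) E. graph V E \<and> has_diameter V E 3 \<longrightarrow>
            chi_ei V E \<ge> packing_number V E \<and> packing_number V E \<ge> gamma2 V E)
       \<and> (\<exists>(V :: nat set) E. graph V E \<and> has_diameter V E 3 \<and>
            chi_ei V E = packing_number V E \<and> packing_number V E = gamma2 V E)"
proof
  show "\<forall>(V :: 'a set) E. graph V E \<and> has_diameter V E 3 \<longrightarrow>
            chi_ei V E \<ge> packing_number V E \<and> packing_number V E \<ge> gamma2 V E"
    using part1 by blast
  have "chi_ei c6V c6E \<ge> packing_number c6V c6E \<and> packing_number c6V c6E \<ge> gamma2 c6V c6E"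
    using part1[OF c6_graph c6_diam] .
  with c6_chi c6_gamma have "chi_ei c6V c6E = packing_number c6V c6E \<and>
      packing_number c6V c6E = gamma2 c6V c6E" by linarith
  then show "\<exists>(V :: nat set) E. graph V E \<and> has_diameter V E 3 \<and>
            chi_ei V E = packing_number V E \<and> packing_number V E = gamma2 V E"
    using c6_graph c6_diam by blast
qed

end
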